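(* Let $p$ be a prime, $k\ge 1$, and $G=\mathbb{Z}_{p^k}$. Then: (i) there is a deterministic query algorithm that, for every finite set $X$ and every function $f:G\to X$ hiding a subgroup $H\le G$, makes exactly $2$ queries and correctly decides whether $H$ is trivial; (ii) there is a deterministic query algorithm that, for every finite set $X$ and every function $f:G\to X$ hiding a subgroup $H\le G$, outputs $H$ and makes at most $2+\log_p\frac{|G|}{|H|}$ queries, i.e. $O\!\left(1+\log\frac{|G|}{|H|}\right)$ queries.
   Context: Hidden subgroup problem ($\mathsf{HSP}$): $G$ is a finite group (known to the algorithm), $X$ a finite set, and $f:G\to X$ is an unknown function with the promise that there is a subgroup $H\le G$ such that for all $g_1,g_2\in G$, $f(g_1)=f(g_2)$ iff $g_1H=g_2H$; we say $f$ hides $H$. The identification version asks to output $H$; the decision version asks whether $H$ is the trivial group $\{e\}$. A deterministic query algorithm accesses $f$ only by adaptively choosing elements $g\in G$ and receiving $f(g)$ (a query); its query complexity on $f$ is the number of queries made. $\mathbb{Z}_{p^k}$ is the additive group of integers modulo $p^k$. *)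

theory Defs
  imports Complex_Main "HOL-Computational_Algebra.Primes" "HOL-Algebra.Coset"
begin

definition Zmod :: "nat \<Rightarrow> nat monoid" where
  "Zmod n = \<lparr>carrier = {0..<n}, mult = (\<lambda>a b. (a + b) mod n), one = 0\<rparr>"

definition hides :: "('g, 'm) monoid_scheme \<Rightarrow> ('g \<Rightarrow> 'x) \<Rightarrow> 'g set \<Rightarrow> bool" where
  "hides G f H \<longleftrightarrow> subgroup H G \<and>
     (\<forall>g1\<in>carrier G. \<forall>g2\<in>carrier G. f g1 = f g2 \<longleftrightarrow> g1 <#\<^bsub>G\<^esub> H = g2 <#\<^bsub>G\<^esub> H)"

text \<open>Deterministic adaptive query algorithms (decision trees): either qoutput a
  result, or query an element g and continue depending on the answer f g.\<close>
datatype ('g, 'x, 'r) qalg = Output 'r | Query 'g "'x \<Rightarrow> ('g, 'x, 'r) qalg"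

primrec exec :: "('g, 'x, 'r) qalg \<Rightarrow> ('g \<Rightarrow> 'x) \<Rightarrow> 'r \<times> 'g list" where
  "exec (Output r) f = (r, [])"
| "exec (Query g c) f = (case exec (c (f g)) f of (r, qs) \<Rightarrow> (r, g # qs))"

definition qoutput :: "('g, 'x, 'r) qalg \<Rightarrow> ('g \<Rightarrow> 'x) \<Rightarrow> 'r" where
  "qoutput A f = fst (exec A f)"

definition queries :: "('g, 'x, 'r) qalg \<Rightarrow> ('g \<Rightarrow> 'x) \<Rightarrow> 'g list" where
  "queries A f = snd (exec A f)"

end

theory Submission
  imports Defs
begin

lemma Zmod_simps [simp]:
  "carrier (Zmod n) = {0..<n}" "mult (Zmod n) a b = (a + b) mod n" "one (Zmod n) = 0"
  by (simp_all add: Zmod_def)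

lemma sub_props:
  assumes "subgroup H (Zmod n)"
  shows "H \<subseteq> {0..<n}" "0 \<in> H" "\<And>a b. a \<in> H \<Longrightarrow> b \<in> H \<Longrightarrow> (a + b) mod n \<in> H"
  using subgroup.subset[OF assms] subgroup.one_closed[OF assms] subgroup.m_closed[OF assms]
  by auto

lemma mult_closed:
  assumes "subgroup H (Zmod n)" "a \<in> H"
  shows "(c * a) mod n \<in> H"
proof (induction c)
  case 0
  then show ?case using sub_props(2)[OF assms(1)] by simp
next
  case (Suc c)
  have "(a + (c * a) mod n) mod n \<in> H" using sub_props(3)[OF assms(1) assms(2) Suc] .
  then show ?case by (simp add: mod_add_right_eq add.commute)
qed

lemma gcd_in:
  assumes "subgroup H (Zmod n)" "a \<in> H" "a \<noteq> 0"
  shows "gcd a n \<in> H"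
proof -
  have an: "a < n" using sub_props(1)[OF assms(1)] assms(2) by auto
  obtain x y where xy: "a * x = n * y + gcd a n" using bezout_nat[OF assms(3)] by blast
  have "gcd a n \<le> a" using assms(3) by (simp add: gcd_le1_nat)
  hence "gcd a n < n" using an by simp
  hence "(x * a) mod n = gcd a n" using xy by (simp add: mult.commute)
  with mult_closed[OF assms(1,2)] show ?thesis by metis
qed

lemma structure_lemma:
  assumes "subgroup H (Zmod n)" "n > 0"
  shows "\<exists>m. m dvd n \<and> m > 0 \<and> H = {x. x < n \<and> m dvd x}"
proof (cases "H \<subseteq> {0}")
  case True
  hence "H = {0}" using sub_props(2)[OF assms(1)] by auto
  moreover have "{x. x < n \<and> n dvd x} = {0}" using assms(2)
    by (auto dest: dvd_imp_le)
  ultimately show ?thesis using assms(2) by (intro exI[of _ n]) auto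
next
  case False
  have Hsub: "H \<subseteq> {0..<n}" using sub_props(1)[OF assms(1)] .
  hence fin: "finite (H - {0})" by (meson finite_Diff finite_atLeastLessThan finite_subset)
  define m where "m = Min (H - {0})"
  have ne: "H - {0} \<noteq> {}" using False by auto
  have mH: "m \<in> H" "m \<noteq> 0" using Min_in[OF fin ne] unfolding m_def by auto
  have mle: "\<And>y. y \<in> H \<Longrightarrow> y \<noteq> 0 \<Longrightarrow> m \<le> y" unfolding m_def using fin by auto
  have mn: "m < n" using mH Hsub by auto
  have "gcd m n \<in> H" using gcd_in[OF assms(1) mH] .
  moreover have "gcd m n \<noteq> 0" using mH by simp
  ultimately have "m \<le> gcd m n" using mle by blast
  moreover have "gcd m n \<le> m" using mH by (simp add: gcd_le1_nat)
  ultimately have "gcd m n = m" by simp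
  hence mdvd: "m dvd n" by (metis gcd_dvd2)
  have "H = {x. x < n \<and> m dvd x}"
  proof
    show "H \<subseteq> {x. x < n \<and> m dvd x}"
    proof
      fix x assume xH: "x \<in> H"
      have xn: "x < n" using xH Hsub by auto
      have "m dvd x"
      proof (cases "x = 0")
        case True then show ?thesis by simp
      next
        case False
        obtain a b where ab: "x * a = m * b + gcd x m" using bezout_nat[OF False] by blast
        define c where "c = (n div m) * b - b"
        have nm1: "n div m \<ge> 1" using mn mH by (simp add: div_greater_zero_iff Suc_le_eq)
        have "m * b + m * c = m * (n div m * b)"
          unfolding c_def using nm1
          by (simp add: diff_mult_distrib2 add_mult_distrib2 algebra_simps)
        also have "\<dots> = n * b" using mdvd by simp
        finally have e: "m * b + m * c = n * b" .
        have "x * a + m * c = gcd x m + n * b" using ab e by simp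
        hence "(x * a + m * c) mod n = gcd x m mod n" by simp
        moreover have "gcd x m \<le> m" using mH by (simp add: gcd_le2_nat)
        ultimately have g: "(x * a + m * c) mod n = gcd x m" using mn by simp
        have "((a * x) mod n + (c * m) mod n) mod n \<in> H"
          using sub_props(3)[OF assms(1) mult_closed[OF assms(1) xH] mult_closed[OF assms(1) mH(1)]] .
        hence "gcd x m \<in> H" using g by (simp add: mod_add_eq mult.commute)
        moreover have "gcd x m \<noteq> 0" using False by simp
        ultimately have "m \<le> gcd x m" using mle by blast
        hence "gcd x m = m" using \<open>gcd x m \<le> m\<close> by simp
        then show ?thesis by (metis gcd_dvd1)
      qed
      then show "x \<in> {x. x < n \<and> m dvd x}" using xn by simp
    qed
  next
    show "{x. x < n \<and> m dvd x} \<subseteq> H"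
    proof
      fix x assume "x \<in> {x. x < n \<and> m dvd x}"
      then obtain q where "x = m * q" "x < n" by auto
      then have "(q * m) mod n = x" by (simp add: mult.commute)
      then show "x \<in> H" using mult_closed[OF assms(1) mH(1), of q] by simp
    qed
  qed
  then show ?thesis using mdvd mH by auto
qed

lemma coset_eq:
  assumes H: "H = {x. x < n \<and> m dvd x}" and mdvd: "m dvd n" and "n > 0" and an: "a < n"
  shows "(a <#\<^bsub>Zmod n\<^esub> H = \<one>\<^bsub>Zmod n\<^esub> <#\<^bsub>Zmod n\<^esub> H) \<longleftrightarrow> a \<in> H"
proof -
  have c: "\<And>b. b <#\<^bsub>Zmod n\<^esub> H = (\<lambda>h. (b + h) mod n) ` H"
    by (auto simp: l_coset_def)
  have z: "(\<lambda>h. (0 + h) mod n) ` H = H" using H by (auto simp: image_iff)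
  show ?thesis
  proof
    assume "a <#\<^bsub>Zmod n\<^esub> H = \<one>\<^bsub>Zmod n\<^esub> <#\<^bsub>Zmod n\<^esub> H"
    hence e: "(\<lambda>h. (a + h) mod n) ` H = H" using c z by simp
    have "0 \<in> H" using H assms(3) by simp
    hence "(a + 0) mod n \<in> H" using e by blast
    then show "a \<in> H" using an by simp
  next
    assume aH: "a \<in> H"
    have "(\<lambda>h. (a + h) mod n) ` H = H"
    proof
      show "(\<lambda>h. (a + h) mod n) ` H \<subseteq> H"
        using aH H mdvd assms(3) by (auto simp: dvd_mod)
    next
      show "H \<subseteq> (\<lambda>h. (a + h) mod n) ` H"
      proof
        fix h assume hH: "h \<in> H"
        define h' where "h' = (h + n - a) mod n"
        have "m dvd h + n - a" using hH aH H mdvd by (auto intro!: dvd_diff_nat)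
        hence "h' \<in> H" unfolding h'_def using H mdvd assms(3) by (auto simp: dvd_mod)
        moreover have "(a + h') mod n = h" unfolding h'_def using hH H an
          by (simp add: mod_add_right_eq)
        ultimately show "h \<in> (\<lambda>h. (a + h) mod n) ` H" by force
      qed
    qed
    then show "a <#\<^bsub>Zmod n\<^esub> H = \<one>\<^bsub>Zmod n\<^esub> <#\<^bsub>Zmod n\<^esub> H" using c z by simp
  qed
qed

lemma hides_char:
  fixes p k :: nat
  assumes p: "prime p" and h: "hides (Zmod (p ^ k)) f H"
  shows "\<exists>j\<le>k. H = {x. x < p ^ k \<and> p ^ j dvd x} \<and>
           (\<forall>a < p ^ k. f a = f 0 \<longleftrightarrow> a \<in> H)"
proof -
  have n0: "p ^ k > 0" using p by (simp add: prime_gt_0_nat)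
  have sg: "subgroup H (Zmod (p ^ k))" using h unfolding hides_def by blast
  obtain m where m: "m dvd p ^ k" "H = {x. x < p ^ k \<and> m dvd x}"
    using structure_lemma[OF sg n0] by blast
  obtain j where j: "j \<le> k" "m = p ^ j" using m(1) divides_primepow_nat[OF p] by blast
  have "\<forall>a < p ^ k. f a = f 0 \<longleftrightarrow> a \<in> H"
  proof (intro allI impI)
    fix a assume a: "a < p ^ k"
    have "f a = f 0 \<longleftrightarrow> a <#\<^bsub>Zmod (p^k)\<^esub> H = \<one>\<^bsub>Zmod (p^k)\<^esub> <#\<^bsub>Zmod (p^k)\<^esub> H"
      using h a n0 unfolding hides_def by simp
    then show "f a = f 0 \<longleftrightarrow> a \<in> H" using coset_eq[OF m(2) m(1) n0 a] by simp
  qed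
  then show ?thesis using j m by blast
qed

primrec srch :: "nat \<Rightarrow> nat \<Rightarrow> nat \<Rightarrow> nat \<Rightarrow> 'x \<Rightarrow> (nat, 'x, nat set) qalg" where
  "srch n p 0 i a = Output {0}"
| "srch n p (Suc r) i a = Query (p ^ i) (\<lambda>b. if b = a then Output {x. x < n \<and> p ^ i dvd x}
       else srch n p r (Suc i) a)"

lemma pow_dvd_iff:
  fixes p :: nat assumes "prime p" shows "p ^ j dvd p ^ i \<longleftrightarrow> j \<le> i"
  using prime_gt_1_nat[OF assms] power_dvd_imp_le le_imp_power_dvd by blast

lemma srch_correct:
  fixes p k j :: nat
  assumes p: "prime p" and jk: "j \<le> k"
    and H: "H = {x. x < p ^ k \<and> p ^ j dvd x}"
    and fH: "\<forall>a < p ^ k. f a = f 0 \<longleftrightarrow> a \<in> H"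
  shows "i \<le> j \<Longrightarrow> i + r = k \<Longrightarrow>
     fst (exec (srch (p^k) p r i (f 0)) f) = H \<and> set (snd (exec (srch (p^k) p r i (f 0)) f)) \<subseteq> {0..<p^k}
     \<and> length (snd (exec (srch (p^k) p r i (f 0)) f)) \<le> j + 1 - i"
proof (induction r arbitrary: i)
  case 0
  then have "j = k" "i = k" using jk by auto
  then have "H = {0}" using H p by (auto simp: prime_gt_0_nat dest: dvd_imp_le)
  then show ?case by simp
next
  case (Suc r)
  have ik: "i < k" using Suc.prems by simp
  have pik: "p ^ i < p ^ k" using ik prime_gt_1_nat[OF p] by simp
  have mem: "p ^ i \<in> H \<longleftrightarrow> j \<le> i" using H pik pow_dvd_iff[OF p] by auto
  show ?case
  proof (cases "i = j")
    case True
    then have "f (p ^ i) = f 0" using fH pik mem by simp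
    then show ?thesis using True H pik by simp
  next
    case False
    then have "f (p ^ i) \<noteq> f 0" using fH pik mem Suc.prems by simp
    moreover have si: "Suc i \<le> j" "Suc i + r = k" using False Suc.prems by auto
    note IH = Suc.IH[OF this]
    ultimately show ?thesis using pik si by (auto split: prod.splits)
  qed
qed

theorem theorem1:
  fixes p k :: nat
  assumes "prime p" and "k \<ge> 1"
  shows
    "(\<exists>A :: (nat, 'x, bool) qalg.
        \<forall>(X :: 'x set) f H. finite X \<and> f \<in> carrier (Zmod (p ^ k)) \<rightarrow> X
            \<and> hides (Zmod (p ^ k)) f H \<longrightarrow>
          set (queries A f) \<subseteq> carrier (Zmod (p ^ k))
          \<and> length (queries A f) = 2
          \<and> (qoutput A f \<longleftrightarrow> H = {\<one>\<^bsub>Zmod (p ^ k)\<^esub>}))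
     \<and>
     (\<exists>A :: (nat, 'x, nat set) qalg.
        \<forall>(X :: 'x set) f H. finite X \<and> f \<in> carrier (Zmod (p ^ k)) \<rightarrow> X
            \<and> hides (Zmod (p ^ k)) f H \<longrightarrow>
          set (queries A f) \<subseteq> carrier (Zmod (p ^ k))
          \<and> real (length (queries A f))
              \<le> 2 + log (real p) (real (card (carrier (Zmod (p ^ k)))) / real (card H))
          \<and> qoutput A f = H)"
proof
  have p1: "p > 1" using prime_gt_1_nat[OF assms(1)] by simp
  show "\<exists>A :: (nat, 'x, bool) qalg.
        \<forall>(X :: 'x set) f H. finite X \<and> f \<in> carrier (Zmod (p ^ k)) \<rightarrow> X
            \<and> hides (Zmod (p ^ k)) f H \<longrightarrow>
          set (queries A f) \<subseteq> carrier (Zmod (p ^ k))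
          \<and> length (queries A f) = 2
          \<and> (qoutput A f \<longleftrightarrow> H = {\<one>\<^bsub>Zmod (p ^ k)\<^esub>})"
  proof (intro exI[of _ "Query 0 (\<lambda>a. Query (p^(k-1)) (\<lambda>b. Output (a \<noteq> b)))"] allI impI, elim conjE)
    fix X :: "'x set" and f H
    assume h: "hides (Zmod (p ^ k)) f H"
    obtain j where j: "j \<le> k" "H = {x. x < p ^ k \<and> p ^ j dvd x}"
         "\<forall>a < p ^ k. f a = f 0 \<longleftrightarrow> a \<in> H"
      using hides_char[OF assms(1) h] by blast
    have lt: "p ^ (k-1) < p ^ k" using p1 assms(2) by simp
    have mem: "p ^ (k-1) \<in> H \<longleftrightarrow> j \<le> k - 1" using j(2) lt pow_dvd_iff[OF assms(1)] by auto
    have triv: "H = {0} \<longleftrightarrow> j = k"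
    proof
      assume "H = {0}"
      moreover have "j < k \<Longrightarrow> p ^ j \<in> H" using j(2) p1 by simp
      moreover have "p ^ j \<noteq> 0" using p1 by simp
      ultimately show "j = k" using j(1) by (metis le_neq_implies_less singletonD)
    next
      assume "j = k" then show "H = {0}" using j(2) p1 by (auto dest: dvd_imp_le)
    qed
    have "f (p^(k-1)) = f 0 \<longleftrightarrow> j \<le> k - 1" using j(3) lt mem by simp
    then show "set (queries (Query 0 (\<lambda>a. Query (p^(k-1)) (\<lambda>b. Output (a \<noteq> b)))) f) \<subseteq> carrier (Zmod (p ^ k))
          \<and> length (queries (Query 0 (\<lambda>a. Query (p^(k-1)) (\<lambda>b. Output (a \<noteq> b)))) f) = 2
          \<and> (qoutput (Query 0 (\<lambda>a. Query (p^(k-1)) (\<lambda>b. Output (a \<noteq> b)))) f \<longleftrightarrow> H = {\<one>\<^bsub>Zmod (p ^ k)\<^esub>})"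
      using triv lt j(1) p1 by (auto simp: queries_def qoutput_def)
  qed
next
  have p1: "p > 1" using prime_gt_1_nat[OF assms(1)] by simp
  show "\<exists>A :: (nat, 'x, nat set) qalg.
        \<forall>(X :: 'x set) f H. finite X \<and> f \<in> carrier (Zmod (p ^ k)) \<rightarrow> X
            \<and> hides (Zmod (p ^ k)) f H \<longrightarrow>
          set (queries A f) \<subseteq> carrier (Zmod (p ^ k))
          \<and> real (length (queries A f))
              \<le> 2 + log (real p) (real (card (carrier (Zmod (p ^ k)))) / real (card H))
          \<and> qoutput A f = H"
  proof (intro exI[of _ "Query 0 (\<lambda>a. srch (p^k) p k 0 a)"] allI impI, elim conjE)
    fix X :: "'x set" and f H
    assume h: "hides (Zmod (p ^ k)) f H"
    obtain j where j: "j \<le> k" "H = {x. x < p ^ k \<and> p ^ j dvd x}"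
         "\<forall>a < p ^ k. f a = f 0 \<longleftrightarrow> a \<in> H"
      using hides_char[OF assms(1) h] by blast
    note S = srch_correct[OF assms(1) j, of 0 k]
    have cardH: "card H = p ^ (k - j)"
    proof -
      have "H = (\<lambda>c. p ^ j * c) ` {..<p ^ (k - j)}"
      proof -
        have e: "p ^ k = p ^ j * p ^ (k - j)" using j(1) by (simp add: power_add[symmetric])
        show ?thesis unfolding j(2) e using p1 by (auto simp: image_iff)
      qed
      moreover have "inj_on (\<lambda>c. p ^ j * c) {..<p ^ (k - j)}" using p1 by (auto simp: inj_on_def)
      ultimately show ?thesis by (simp add: card_image)
    qed
    have "real (p ^ k) / real (card H) = real p ^ j"
      using cardH j(1) p1 by (simp add: field_simps power_add[symmetric])
    hence lg: "log (real p) (real (card (carrier (Zmod (p ^ k)))) / real (card H)) = j"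
      using p1 by simp
    have p0: "p ^ 0 = 1" by simp
    have n0: "(0::nat) < p ^ k" using p1 by simp
    show "set (queries (Query 0 (\<lambda>a. srch (p^k) p k 0 a)) f) \<subseteq> carrier (Zmod (p ^ k))
          \<and> real (length (queries (Query 0 (\<lambda>a. srch (p^k) p k 0 a)) f))
              \<le> 2 + log (real p) (real (card (carrier (Zmod (p ^ k)))) / real (card H))
          \<and> qoutput (Query 0 (\<lambda>a. srch (p^k) p k 0 a)) f = H"
      using S n0 unfolding lg by (auto simp: queries_def qoutput_def split: prod.splits)
  qed
qed

end
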